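(* Let $W\subset S^1$ with $W\cong\{0,\tfrac14,\tfrac34,a\}$ for some $a\in S^1\setminus\{0,\tfrac14,\tfrac12,\tfrac34\}$. Then $P(W)$ holds.
   Context: Identify $S^1$ with $\mathbb{R}/\mathbb{Z}$. The group $O(2)$ acts on $S^1$ by translations $x\mapsto x+a$ and reflections $x\mapsto -x+2a$. A coloring $c:S^1\to\{R,B\}$ is distinguishing if no non-identity $\gamma\in O(2)$ satisfies $c\circ\gamma=c$. For $W\subset S^1$ with trivial pointwise stabilizer in $O(2)$, $P(W)$ holds if every precoloring $c:S^1\setminus W\to\{R,B\}$ extends to a distinguishing coloring of $S^1$. Write $W\cong W'$ if $W'=\gamma(W)$ for some $\gamma\in O(2)$. *)

theory Defs
  imports Complex_Main
begin

text \<open>The circle S^1 = R/Z, represented by the canonical representatives in [0,1).\<close>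
typedef circle = "{x::real. 0 \<le> x \<and> x < 1}"
  by (rule exI[of _ 0]) auto

definition cpt :: "real \<Rightarrow> circle" where
  "cpt x = Abs_circle (frac x)"

definition translation :: "real \<Rightarrow> circle \<Rightarrow> circle" where
  "translation a = (\<lambda>p. cpt (Rep_circle p + a))"

definition reflection :: "real \<Rightarrow> circle \<Rightarrow> circle" where
  "reflection a = (\<lambda>p. cpt (- Rep_circle p + 2 * a))"

definition O2 :: "(circle \<Rightarrow> circle) set" where
  "O2 = range translation \<union> range reflection"

datatype color = R | B

definition distinguishing :: "(circle \<Rightarrow> color) \<Rightarrow> bool" where
  "distinguishing c \<longleftrightarrow> (\<forall>\<gamma>\<in>O2. c \<circ> \<gamma> = c \<longrightarrow> \<gamma> = id)"

definition trivial_stabilizer :: "circle set \<Rightarrow> bool" where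
  "trivial_stabilizer W \<longleftrightarrow> (\<forall>\<gamma>\<in>O2. (\<forall>w\<in>W. \<gamma> w = w) \<longrightarrow> \<gamma> = id)"

text \<open>P(W): W has trivial pointwise stabilizer and every precoloring of S^1 \ W
  (given as a total function whose values on W are ignored) extends to a
  distinguishing coloring.\<close>
definition P :: "circle set \<Rightarrow> bool" where
  "P W \<longleftrightarrow> trivial_stabilizer W \<and>
     (\<forall>c :: circle \<Rightarrow> color. \<exists>d. (\<forall>x. x \<notin> W \<longrightarrow> d x = c x) \<and> distinguishing d)"

definition congruent_sets :: "circle set \<Rightarrow> circle set \<Rightarrow> bool" where
  "congruent_sets W W' \<longleftrightarrow> (\<exists>\<gamma>\<in>O2. W' = \<gamma> ` W)"

end

theory Submission
  imports Defs
begin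


lemma Ints_2_cases:
  fixes s :: real
  assumes "2 * s \<in> \<int>"
  shows "s \<in> \<int> \<or> s - 1/2 \<in> \<int>"
proof -
  obtain n where n: "2 * s = of_int n" using assms by (auto elim: Ints_cases)
  show ?thesis
  proof (cases "even n")
    case True
    then obtain k where "n = 2 * k" by auto
    then have "s = of_int k" using n by simp
    then show ?thesis by auto
  next
    case False
    then obtain k where "n = 2 * k + 1" using oddE by blast
    then have "s - 1/2 = of_int k" using n by simp
    then show ?thesis by auto
  qed
qed

lemma per_int:
  fixes e :: "real \<Rightarrow> 'a"
  assumes per: "\<And>x. e (x + 1) = e x"
  shows "e (x + of_int n) = e x"
proof (induction n arbitrary: x rule: int_induct[where k=0])
  case base then show ?case by simp
next
  case (step1 i) then show ?case using per[of "x + of_int i"] by (simp add: add.assoc)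
next
  case (step2 i)
  have "e (x + of_int (i - 1)) = e (x + of_int (i-1) + 1)" using per[of "x + of_int (i-1)"] by simp
  also have "\<dots> = e (x + of_int i)" by (simp add: algebra_simps)
  finally show ?case using step2.IH[of x] by simp
qed

lemma per_Ints:
  fixes e :: "real \<Rightarrow> 'a"
  assumes per: "\<And>x. e (x + 1) = e x" and "n \<in> \<int>"
  shows "e (x + n) = e x"
  using assms(2) per_int[of e, OF per] by (auto elim: Ints_cases)

lemma per_eq:
  fixes e :: "real \<Rightarrow> 'a"
  assumes per: "\<And>x. e (x + 1) = e x" and "x - y \<in> \<int>"
  shows "e x = e y"
  using per_Ints[of e, OF per assms(2), of y] by simp

lemma half_not_Int: "(1/2::real) \<notin> \<int>"
proof
  assume "(1/2::real) \<in> \<int>"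
  then obtain n where "(1/2::real) = of_int n" by (auto elim: Ints_cases)
  then have "(1::real) = 2 * of_int n" by simp
  then have "(1::int) = 2 * n" by (metis of_int_1 of_int_eq_iff of_int_mult of_int_numeral)
  then show False by presburger
qed

lemma Ints_comb: "a \<in> \<int> \<Longrightarrow> b \<in> \<int> \<Longrightarrow> c = a + b \<Longrightarrow> (c::real) \<in> \<int>"
  by (simp add: Ints_add)
lemma Ints_comb2: "a \<in> \<int> \<Longrightarrow> b \<in> \<int> \<Longrightarrow> c = a - b \<Longrightarrow> (c::real) \<in> \<int>"
  by (simp add: Ints_diff)
lemma Ints_neg': "a \<in> \<int> \<Longrightarrow> c = - a \<Longrightarrow> (c::real) \<in> \<int>"
  by (simp add: Ints_minus)
lemma Ints_2: "a \<in> \<int> \<Longrightarrow> c = 2 * a \<Longrightarrow> (c::real) \<in> \<int>"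
  by (simp add: Ints_mult)

definition I1 :: "real \<Rightarrow> bool" where "I1 x \<longleftrightarrow> x - 1/4 \<in> \<int>"
definition I3 :: "real \<Rightarrow> bool" where "I3 x \<longleftrightarrow> x - 3/4 \<in> \<int>"
definition PP :: "real \<Rightarrow> bool" where "PP x \<longleftrightarrow> 2*x - 1/2 \<in> \<int>"

lemma I13_excl: "\<not> (I1 x \<and> I3 x)"
proof
  assume "I1 x \<and> I3 x"
  then have "x - 1/4 \<in> \<int>" "x - 3/4 \<in> \<int>" unfolding I1_def I3_def by auto
  then have "1/2 \<in> (\<int>::real set)" by (rule Ints_comb2) simp
  then show False using half_not_Int by simp
qed

lemma PP_iff: "PP x \<longleftrightarrow> I1 x \<or> I3 x"
proof
  assume "PP x"
  then have "2 * (x - 1/4) \<in> \<int>" unfolding PP_def by (simp add: algebra_simps)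
  then have "x - 1/4 \<in> \<int> \<or> x - 1/4 - 1/2 \<in> \<int>" by (rule Ints_2_cases)
  then show "I1 x \<or> I3 x" unfolding I1_def I3_def by (simp add: algebra_simps)
next
  assume "I1 x \<or> I3 x"
  then show "PP x"
  proof
    assume "I1 x" then show ?thesis unfolding PP_def I1_def by (rule Ints_2) simp
  next
    assume "I3 x" then have "2 * (x - 3/4) \<in> \<int>" unfolding I3_def by (rule Ints_2) simp
    then show ?thesis unfolding PP_def by (rule Ints_comb[OF _ Ints_1]) simp
  qed
qed

lemma I1_shift: "I1 (x + 1/2) = I3 x" "I1 (x - 1/2) = I3 x" "I3 (x + 1/2) = I1 x" "I3 (x - 1/2) = I1 x"
proof -
  have a: "\<And>y::real. (y + 1 \<in> \<int>) = (y \<in> \<int>)" "\<And>y::real. (y - 1 \<in> \<int>) = (y \<in> \<int>)"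
    by (metis Ints_1 Ints_add Ints_diff add_diff_cancel_right' diff_add_cancel)+
  show "I1 (x + 1/2) = I3 x" unfolding I1_def I3_def using a(1)[of "x - 3/4"] by (simp add: algebra_simps)
  show "I1 (x - 1/2) = I3 x" unfolding I1_def I3_def using a(2)[of "x - 3/4"] by (simp add: algebra_simps)
  show "I3 (x + 1/2) = I1 x" unfolding I1_def I3_def by (simp add: algebra_simps)
  show "I3 (x - 1/2) = I1 x" unfolding I1_def I3_def using a(2)[of "x - 1/4"] by (simp add: algebra_simps)
qed

lemma Ints_pm1: "((y::real) + 1 \<in> \<int>) = (y \<in> \<int>)" "((y::real) - 1 \<in> \<int>) = (y \<in> \<int>)"
  by (metis Ints_1 Ints_add Ints_diff add_diff_cancel_right' diff_add_cancel)+

lemma PP_shift: "PP (x + 1/2) = PP x" "PP (x - 1/2) = PP x"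
  unfolding PP_def using Ints_pm1[of "2*x - 1/2"] by (simp_all add: algebra_simps)

lemma I_per: "I1 (x + 1) = I1 x" "I3 (x + 1) = I3 x" "PP (x+1) = PP x"
proof -
  have a: "\<And>y::real. (y + 1 \<in> \<int>) = (y \<in> \<int>)"
    by (metis Ints_1 Ints_add Ints_diff add_diff_cancel_right')
  show "I1 (x + 1) = I1 x" "I3 (x + 1) = I3 x" unfolding I1_def I3_def using a[of "x - 1/4"] a[of "x - 3/4"] by (simp_all add: algebra_simps)
  have b: "\<And>y::real. (y + 2 \<in> \<int>) = (y \<in> \<int>)"
    by (metis Ints_add Ints_diff Ints_numeral add_diff_cancel_right')
  show "PP (x+1) = PP x" unfolding PP_def using b[of "2*x - 1/2"] by (simp add: algebra_simps)
qed

definition nobad :: "real \<Rightarrow> (real \<Rightarrow> bool) \<Rightarrow> bool" where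
  "nobad \<alpha> E \<longleftrightarrow> E (1/2) \<noteq> E 0 \<and> E (-\<alpha>) \<noteq> E \<alpha>"

definition has_sym :: "(real \<Rightarrow> bool) \<Rightarrow> bool" where
  "has_sym E \<longleftrightarrow> (\<exists>b. b \<notin> \<int> \<and> (\<forall>x. E (x + b) = E x)) \<or> (\<exists>c. \<forall>x. E (c - x) = E x)"

lemma nb_trans:
  assumes per: "\<And>x. F (x+1) = F x" and nb: "nobad \<alpha> F" and t: "\<forall>x. F (x + b) = F x"
    and h: "b - 1/2 \<in> \<int>"
  shows False
proof -
  have "F (0 + b) = F 0" using t by blast
  moreover have "F b = F (1/2)" using per_eq[of F, OF per h] .
  ultimately show False using nb unfolding nobad_def by simp
qed

lemma nb_refl:
  assumes per: "\<And>x. F (x+1) = F x" and nb: "nobad \<alpha> F" and r: "\<forall>x. F (c - x) = F x"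
  shows "c \<notin> \<int>" "c - 1/2 \<notin> \<int>"
proof
  assume h: "c \<in> \<int>"
  have "F (c - \<alpha>) = F \<alpha>" using r by blast
  moreover have "F (c - \<alpha>) = F (-\<alpha>)" by (rule per_eq[of F, OF per]) (simp add: h)
  ultimately show False using nb unfolding nobad_def by simp
next
  show "c - 1/2 \<notin> \<int>"
  proof
    assume h: "c - 1/2 \<in> \<int>"
    have "F (c - 0) = F 0" using r by blast
    moreover have "F c = F (1/2)" using per_eq[of F, OF per h] .
    ultimately show False using nb unfolding nobad_def by simp
  qed
qed

lemma two_b:
  assumes per: "\<And>x. F (x+1) = F x" and nb: "nobad \<alpha> F" and t: "\<forall>x. F (x + b) = F x"
    and b: "b \<notin> \<int>" and h: "2 * b \<in> \<int>"
  shows False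
  using Ints_2_cases[OF h] b nb_trans[OF per nb t] by blast

lemma trans_kill:
  assumes per: "\<And>x. F (x+1) = F x" and nb: "nobad \<alpha> F"
    and b: "b \<notin> \<int>" and t: "\<forall>x. F (x + b) = F x"
    and w: "2*w - 1/2 \<in> \<int>" and F': "\<forall>x. F' x = (F x \<noteq> (x - w \<in> \<int>))"
    and hs: "has_sym F'"
  shows False
proof -
  have tt: "\<And>x. F (x + b) = F x" using t by blast
  have tt': "\<And>x. F (x - b) = F x" using t by (metis diff_add_cancel)
  from hs show False unfolding has_sym_def
  proof (elim disjE exE conjE)
    fix b' assume b': "b' \<notin> \<int>" and t': "\<forall>x. F' (x + b') = F' x"
    define Q where "Q x = ((x + b' - w \<in> \<int>) \<noteq> (x - w \<in> \<int>))" for x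
    have Qe: "Q x = (F (x + b') \<noteq> F x)" for x
      using t'[rule_format, of x] F' unfolding Q_def by (auto simp: algebra_simps)
    have Qb: "Q (x + b) = Q x" for x
      unfolding Qe using tt[of "x + b'"] tt[of x] by (simp add: algebra_simps)
    have Qw: "Q w" unfolding Q_def using b' by simp
    have "Q (w + b)" using Qb Qw by simp
    then have h1: "b + b' \<in> \<int>" unfolding Q_def using b by (simp add: algebra_simps)
    have "Q (w - b)" using Qb[of "w - b"] Qw by simp
    then have h2: "b' - b \<in> \<int>" unfolding Q_def using b
      by (simp add: algebra_simps)
    have "2 * b \<in> \<int>" by (rule Ints_comb2[OF h1 h2]) simp
    then show False using two_b[OF per nb t b] by blast
  next
    fix c assume r: "\<forall>x. F' (c - x) = F' x"
    define Q where "Q x = ((c - x - w \<in> \<int>) \<noteq> (x - w \<in> \<int>))" for x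
    have Qe: "Q x = (F (c - x) \<noteq> F x)" for x
      using r[rule_format, of x] F' unfolding Q_def by (auto simp: algebra_simps)
    have Qb: "Q (x + b) = Q x" for x
      unfolding Qe using tt'[of "c - x"] tt[of x] by (simp add: algebra_simps)
    show False
    proof (cases "c - w - w \<in> \<int>")
      case True
      have "c - 1/2 \<in> \<int>" by (rule Ints_comb[OF True w]) simp
      have "\<not> Q x" for x
      proof -
        have "(c - x - w \<in> \<int>) = (x - w \<in> \<int>)"
        proof
          assume "c - x - w \<in> \<int>" then show "x - w \<in> \<int>" by (rule Ints_comb2[OF True]) simp
        next
          assume "x - w \<in> \<int>" then show "c - x - w \<in> \<int>" by (rule Ints_comb2[OF True]) simp
        qed
        then show ?thesis unfolding Q_def by simp
      qed
      then have "\<forall>x. F (c - x) = F x" using Qe by blast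
      then show False using nb_refl(2)[OF per nb] \<open>c - 1/2 \<in> \<int>\<close> by blast
    next
      case False
      have Qw: "Q w" unfolding Q_def using False by simp
      have "Q (w + b)" using Qb Qw by simp
      then have h1: "c - w - b - w \<in> \<int>" unfolding Q_def using b by (simp add: algebra_simps)
      have "Q (w - b)" using Qb[of "w - b"] Qw by simp
      then have h2: "c - w + b - w \<in> \<int>" unfolding Q_def using b
        by (simp add: algebra_simps)
      have "2 * b \<in> \<int>" by (rule Ints_comb2[OF h2 h1]) simp
      then show False using two_b[OF per nb t b] by blast
    qed
  qed
qed

lemma neg_half_not_Int: "(-1/2::real) \<notin> \<int>"
proof
  assume "(-1/2::real) \<in> \<int>"
  then have "- (-1/2::real) \<in> \<int>" by (rule Ints_minus)
  then show False using half_not_Int by simp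
qed

lemma PP_xor: "(I1 y \<noteq> I3 y) = PP y" "(I1 y \<noteq> PP y) = I3 y" "(I3 y \<noteq> PP y) = I1 y"
  using PP_iff[of y] I13_excl[of y] by auto

lemma I1_quarter: "I1 (1/4)" "\<not> I3 (1/4)" "PP (1/4)"
  unfolding I1_def I3_def PP_def using neg_half_not_Int by simp_all

lemma PP_char: "PP y = (2*y - 1/2 \<in> \<int>)" by (simp add: PP_def)

lemma grid_final:
  fixes e :: "real \<Rightarrow> bool" and r u :: int
  defines "fm \<equiv> \<lambda>j::int. e (of_int (j mod 12) / 12)"
  assumes R00: "\<And>j. fm (2*r - j) = fm j"
    and R11: "\<And>j. (fm (2*r + 6 - j) \<noteq> ((2*r + 6 - j) mod 6 = 3)) = (fm j \<noteq> (j mod 6 = 3))"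
    and R10: "\<And>j. (fm (4*r - 6*u - j) \<noteq> ((4*r - 6*u - j) mod 12 = 3)) = (fm j \<noteq> (j mod 12 = 3))"
    and R01: "\<And>j. (fm (4*r - 6*u + 6 - j) \<noteq> ((4*r - 6*u + 6 - j) mod 12 = 9)) = (fm j \<noteq> (j mod 12 = 9))"
    and r: "r = 1 \<or> r = 2 \<or> r = 4 \<or> r = 5" and u: "u = 0 \<or> u = 1"
  shows False
  using r u R00[of 0] R00[of 1] R00[of 2] R00[of 3] R00[of 4] R00[of 5] R00[of 6] R00[of 7] R00[of 8] R00[of 9] R00[of 10] R00[of 11] R11[of 0] R11[of 1] R11[of 2] R11[of 3] R11[of 4] R11[of 5] R11[of 6] R11[of 7] R11[of 8] R11[of 9] R11[of 10] R11[of 11] R10[of 0] R10[of 1] R10[of 2] R10[of 3] R10[of 4] R10[of 5] R10[of 6] R10[of 7] R10[of 8] R10[of 9] R10[of 10] R10[of 11] R01[of 0] R01[of 1] R01[of 2] R01[of 3] R01[of 4] R01[of 5] R01[of 6] R01[of 7] R01[of 8] R01[of 9] R01[of 10] R01[of 11]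
  unfolding fm_def by (elim disjE; simp)


lemma Int_div6: "(of_int m / 6 :: real) \<in> \<int> \<longleftrightarrow> 6 dvd m"
proof
  assume "(of_int m / 6 :: real) \<in> \<int>"
  then obtain z where "(of_int m / 6 :: real) = of_int z" by (auto elim: Ints_cases)
  then have "(of_int m :: real) = of_int (6 * z)" by simp
  then have "m = 6 * z" by (simp only: of_int_eq_iff)
  then show "6 dvd m" by simp
next
  assume "6 dvd m" then obtain z where "m = 6 * z" by auto
  then show "(of_int m / 6 :: real) \<in> \<int>" by simp
qed

lemma Int_div12: "(of_int m / 12 :: real) \<in> \<int> \<longleftrightarrow> 12 dvd m"
proof
  assume "(of_int m / 12 :: real) \<in> \<int>"
  then obtain z where "(of_int m / 12 :: real) = of_int z" by (auto elim: Ints_cases)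
  then have "(of_int m :: real) = of_int (12 * z)" by simp
  then have "m = 12 * z" by (simp only: of_int_eq_iff)
  then show "12 dvd m" by simp
next
  assume "12 dvd m" then obtain z where "m = 12 * z" by auto
  then show "(of_int m / 12 :: real) \<in> \<int>" by simp
qed

lemma PP_grid: "PP (of_int k / 12) = (k mod 6 = 3)"
proof -
  have eq: "2 * (of_int k / 12) - 1/2 = (of_int (k - 3) / 6 :: real)" by (simp add: field_simps)
  have "PP (of_int k / 12) = ((of_int (k - 3) / 6 :: real) \<in> \<int>)" unfolding PP_def eq ..
  then have "PP (of_int k / 12) = (6 dvd (k - 3))" using Int_div6[of "k - 3"] by simp
  also have "\<dots> = (k mod 6 = 3)" using mod_eq_dvd_iff[of k 6 3] by simp
  finally show ?thesis .
qed

lemma I1_grid: "I1 (of_int k / 12) = (k mod 12 = 3)"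
proof -
  have eq: "of_int k / 12 - 1/4 = (of_int (k - 3) / 12 :: real)" by (simp add: field_simps)
  have "I1 (of_int k / 12) = ((of_int (k - 3) / 12 :: real) \<in> \<int>)" unfolding I1_def eq ..
  then have "I1 (of_int k / 12) = (12 dvd (k - 3))" using Int_div12[of "k - 3"] by simp
  also have "\<dots> = (k mod 12 = 3)" using mod_eq_dvd_iff[of k 12 3] by simp
  finally show ?thesis .
qed

lemma I3_grid: "I3 (of_int k / 12) = (k mod 12 = 9)"
proof -
  have eq: "of_int k / 12 - 3/4 = (of_int (k - 9) / 12 :: real)" by (simp add: field_simps)
  have "I3 (of_int k / 12) = ((of_int (k - 9) / 12 :: real) \<in> \<int>)" unfolding I3_def eq ..
  then have "I3 (of_int k / 12) = (12 dvd (k - 9))" using Int_div12[of "k - 9"] by simp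
  also have "\<dots> = (k mod 12 = 9)" using mod_eq_dvd_iff[of k 12 9] by simp
  finally show ?thesis .
qed

locale sys =
  fixes e :: "real \<Rightarrow> bool" and c0 c1 c2 c3 :: real
  assumes per: "\<And>x. e (x+1) = e x"
    and F00: "\<And>x. e (c0 - x) = e x"
    and F11: "\<And>x. (e (c1 - x) \<noteq> PP (c1 - x)) = (e x \<noteq> PP x)"
    and F10: "\<And>x. (e (c2 - x) \<noteq> I1 (c2 - x)) = (e x \<noteq> I1 x)"
    and F01: "\<And>x. (e (c3 - x) \<noteq> I3 (c3 - x)) = (e x \<noteq> I3 x)"
    and ex0: "c0 \<notin> \<int>" "c0 - 1/2 \<notin> \<int>"
    and ex1: "c1 \<notin> \<int>" "c1 - 1/2 \<notin> \<int>"
    and ex2: "c2 \<notin> \<int>" "c2 - 1/2 \<notin> \<int>"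
    and ex3: "c3 \<notin> \<int>" "c3 - 1/2 \<notin> \<int>"
begin

lemma not2: fixes c :: real assumes "c \<notin> \<int>" "c - 1/2 \<notin> \<int>" shows "2*c \<notin> \<int>"
  using Ints_2_cases[of c] assms by blast

lemma PPc: fixes c :: real assumes "c \<notin> \<int>" "c - 1/2 \<notin> \<int>" shows "\<not> PP (c - 1/4)"
proof
  assume "PP (c - 1/4)"
  then have "2*c - 1 \<in> \<int>" unfolding PP_def by (simp add: algebra_simps)
  then have "2*c \<in> \<int>" using Ints_pm1(2)[of "2*c"] by simp
  then show False using not2[OF assms] by blast
qed

lemma I1c: assumes "c - 1/2 \<notin> \<int>" shows "\<not> I1 (c - 1/4)"
proof -
  have "c - 1/4 - 1/4 = c - 1/2" by simp
  then show ?thesis using assms unfolding I1_def by simp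
qed

lemma I3c: assumes "c \<notin> \<int>" shows "\<not> I3 (c - 1/4)"
proof -
  have "c - 1/4 - 3/4 = c - 1" by simp
  then show ?thesis using assms Ints_pm1(2)[of c] unfolding I3_def by simp
qed

lemma e_half: "e (x - 1/2) = e (x + 1/2)"
  by (rule per_eq[of e, OF per]) simp

lemma c23: "c3 - c2 \<notin> \<int>"
proof
  assume h: "c3 - c2 \<in> \<int>"
  have a: "e (c3 - 1/4) = e (c2 - 1/4)" by (rule per_eq[of e, OF per]) (simp add: h)
  have b: "e (c2 - 1/4) = (\<not> e (1/4))" using F10[of "1/4"] I1c[OF ex2(2)] I1_quarter by simp
  have c: "e (c3 - 1/4) = e (1/4)" using F01[of "1/4"] I3c[OF ex3(1)] I1_quarter by simp
  show False using a b c by simp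
qed

lemma c01: "c1 - c0 \<notin> \<int>"
proof
  assume h: "c1 - c0 \<in> \<int>"
  have a: "e (c1 - 1/4) = e (c0 - 1/4)" by (rule per_eq[of e, OF per]) (simp add: h)
  have b: "e (c1 - 1/4) = (\<not> e (1/4))" using F11[of "1/4"] PPc[OF ex1] I1_quarter by simp
  have c: "e (c0 - 1/4) = e (1/4)" using F00[of "1/4"] by simp
  show False using a b c by simp
qed

definition H where "H x = (e x \<noteq> e (x + 1/2))"

lemma H0: "H (c0 - x) = H x"
proof -
  have "e (c0 - x + 1/2) = e (x - 1/2)" using F00[of "x - 1/2"] by (simp add: algebra_simps)
  then show ?thesis unfolding H_def using F00[of x] e_half[of x] by simp
qed

lemma H1: "H (c1 - x) = H x"
proof -
  have a: "(e (c1 - x + 1/2) \<noteq> PP (c1 - x + 1/2)) = (e (x - 1/2) \<noteq> PP (x - 1/2))"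
    using F11[of "x - 1/2"] by (simp add: algebra_simps)
  have b: "PP (c1 - x + 1/2) = PP (c1 - x)" "PP (x - 1/2) = PP x" using PP_shift by auto
  show ?thesis unfolding H_def using a b F11[of x] e_half[of x] by auto
qed

lemma G2: "(H (c2 - x) \<noteq> PP (c2 - x)) = (H x \<noteq> PP x)"
proof -
  have a: "(e (c2 - x + 1/2) \<noteq> I1 (c2 - x + 1/2)) = (e (x - 1/2) \<noteq> I1 (x - 1/2))"
    using F10[of "x - 1/2"] by (simp add: algebra_simps)
  have b: "I1 (c2 - x + 1/2) = I3 (c2 - x)" "I1 (x - 1/2) = I3 x" using I1_shift by auto
  show ?thesis unfolding H_def using a b F10[of x] e_half[of x] PP_xor(1)[of x, symmetric]
      PP_xor(1)[of "c2 - x", symmetric] by auto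
qed

lemma G3: "(H (c3 - x) \<noteq> PP (c3 - x)) = (H x \<noteq> PP x)"
proof -
  have a: "(e (c3 - x + 1/2) \<noteq> I3 (c3 - x + 1/2)) = (e (x - 1/2) \<noteq> I3 (x - 1/2))"
    using F01[of "x - 1/2"] by (simp add: algebra_simps)
  have b: "I3 (c3 - x + 1/2) = I1 (c3 - x)" "I3 (x - 1/2) = I1 x" using I1_shift by auto
  show ?thesis unfolding H_def using a b F01[of x] e_half[of x] PP_xor(1)[of x, symmetric]
      PP_xor(1)[of "c3 - x", symmetric] by auto
qed

lemma Hs: "H (x + (c1 - c0)) = H x"
  using H1[of "c0 - x"] H0[of x] by (simp add: algebra_simps)

lemma Kstep:
  assumes G: "\<And>x. (H (c - x) \<noteq> PP (c - x)) = (H x \<noteq> PP x)" and exc: "c \<notin> \<int>" "c - 1/2 \<notin> \<int>"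
    and ns: "2*(c1 - c0) \<notin> \<int>"
  shows "2*c - 2*(c1 - c0) - 1 \<in> \<int>"
proof -
  define s where "s = c1 - c0"
  have K: "(PP (c - x) \<noteq> PP x) = (H (c - x) \<noteq> H x)" for x using G[of x] by auto
  have "H (c - 1/4 - s) = H (c - 1/4)" using Hs[of "c - 1/4 - s"] unfolding s_def by simp
  moreover have "H (1/4 + s) = H (1/4)" using Hs[of "1/4"] unfolding s_def by simp
  ultimately have "(PP (c - (1/4 + s)) \<noteq> PP (1/4 + s)) = (PP (c - 1/4) \<noteq> PP (1/4))"
    using K[of "1/4 + s"] K[of "1/4"] by (simp add: algebra_simps)
  then have k: "PP (c - (1/4 + s)) \<noteq> PP (1/4 + s)" using PPc[OF exc] I1_quarter by simp
  have "\<not> PP (1/4 + s)" using ns unfolding PP_def s_def by (simp add: algebra_simps)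
  then have "PP (c - (1/4 + s))" using k by simp
  then show ?thesis unfolding PP_def s_def by (simp add: algebra_simps)
qed

lemma dichot: "2*(c1 - c0) \<in> \<int> \<or> 2*(c3 - c2) \<in> \<int>"
proof (cases "2*(c1 - c0) \<in> \<int>")
  case True then show ?thesis by simp
next
  case False
  note ns = False
  have a: "2*c2 - 2*(c1 - c0) - 1 \<in> \<int>" by (rule Kstep[OF G2 ex2 ns])
  have b: "2*c3 - 2*(c1 - c0) - 1 \<in> \<int>" by (rule Kstep[OF G3 ex3 ns])
  have "2*(c3 - c2) \<in> \<int>" by (rule Ints_comb2[OF b a]) (simp add: algebra_simps)
  then show ?thesis by simp
qed

lemma half_step:
  assumes h: "c1 - c0 - 1/2 \<in> \<int>"
  shows "4*c0 - 2*c2 \<in> \<int>" "4*c0 - 2*c3 \<in> \<int>"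
proof -
  have ec1: "e (c1 - x) = e (x + 1/2)" for x
  proof -
    have "e (c1 - x) = e (x + c0 - c1)" using F00[of "x + c0 - c1"] by (simp add: algebra_simps)
    also have "\<dots> = e (x + 1/2)"
      by (rule per_eq[of e, OF per], rule Ints_comb2[of "-1" "c1 - c0 - 1/2"]) (use h in \<open>simp_all add: diff_diff_eq\<close>)
    finally show ?thesis .
  qed
  have G: "(H x \<noteq> PP x) = PP (c1 - x)" for x
    using F11[of x] ec1[of x] unfolding H_def by auto
  have PPinv: "PP (c1 - (c - x)) = PP (c1 - x)"
    if GG: "\<And>x. (H (c - x) \<noteq> PP (c - x)) = (H x \<noteq> PP x)" for c x
    using GG[of x] G[of x] G[of "c - x"] by simp
  have k4': "4*c1 - 4*c0 - 2 \<in> \<int>" by (rule Ints_2[of "2*(c1 - c0 - 1/2)"], rule Ints_2[OF h]) (simp_all add: algebra_simps)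
  have k4: "4*c1 - 4*c0 - 1 \<in> \<int>" by (rule Ints_comb[OF k4' Ints_1]) simp
  show "4*c0 - 2*c2 \<in> \<int>"
  proof -
    have "PP (c1 - (c2 - (c1 - 1/4))) = PP (1/4)" using PPinv[OF G2, of "c1 - 1/4"] by simp
    then have "PP (2*c1 - c2 - 1/4)" using I1_quarter by (simp add: algebra_simps)
    then have "2*(2*c1 - c2 - 1/4) - 1/2 \<in> \<int>" unfolding PP_def .
    then show ?thesis by (rule Ints_comb2[OF _ k4]) (simp add: algebra_simps)
  qed
  show "4*c0 - 2*c3 \<in> \<int>"
  proof -
    have "PP (c1 - (c3 - (c1 - 1/4))) = PP (1/4)" using PPinv[OF G3, of "c1 - 1/4"] by simp
    then have "PP (2*c1 - c3 - 1/4)" using I1_quarter by (simp add: algebra_simps)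
    then have "2*(2*c1 - c3 - 1/4) - 1/2 \<in> \<int>" unfolding PP_def .
    then show ?thesis by (rule Ints_comb2[OF _ k4]) (simp add: algebra_simps)
  qed
qed

lemma swap: "sys (\<lambda>x. e x \<noteq> I1 x) c2 c3 c0 c1"
proof
  show "\<And>x. (e (x + 1) \<noteq> I1 (x + 1)) = (e x \<noteq> I1 x)" using per I_per by simp
  show "\<And>x. (e (c2 - x) \<noteq> I1 (c2 - x)) = (e x \<noteq> I1 x)" by (rule F10)
  show "\<And>x. ((e (c3 - x) \<noteq> I1 (c3 - x)) \<noteq> PP (c3 - x)) = ((e x \<noteq> I1 x) \<noteq> PP x)"
  proof -
    fix x
    have r: "((A \<noteq> I1 a) \<noteq> PP a) = (A \<noteq> I3 a)" for A a using PP_xor(2)[of a] by auto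
    show "((e (c3 - x) \<noteq> I1 (c3 - x)) \<noteq> PP (c3 - x)) = ((e x \<noteq> I1 x) \<noteq> PP x)"
      unfolding r by (rule F01)
  qed
  show "\<And>x. ((e (c0 - x) \<noteq> I1 (c0 - x)) \<noteq> I1 (c0 - x)) = ((e x \<noteq> I1 x) \<noteq> I1 x)"
  proof -
    fix x
    have r: "((A \<noteq> B) \<noteq> B) = A" for A B :: bool by auto
    show "((e (c0 - x) \<noteq> I1 (c0 - x)) \<noteq> I1 (c0 - x)) = ((e x \<noteq> I1 x) \<noteq> I1 x)"
      unfolding r by (rule F00)
  qed
  show "\<And>x. ((e (c1 - x) \<noteq> I1 (c1 - x)) \<noteq> I3 (c1 - x)) = ((e x \<noteq> I1 x) \<noteq> I3 x)"
  proof -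
    fix x
    have r: "((A \<noteq> I1 a) \<noteq> I3 a) = (A \<noteq> PP a)" for A a using PP_xor(1)[of a] by auto
    show "((e (c1 - x) \<noteq> I1 (c1 - x)) \<noteq> I3 (c1 - x)) = ((e x \<noteq> I1 x) \<noteq> I3 x)"
      unfolding r by (rule F11)
  qed
  show "c2 \<notin> \<int>" "c2 - 1/2 \<notin> \<int>" by (fact ex2(1), fact ex2(2))
  show "c3 \<notin> \<int>" "c3 - 1/2 \<notin> \<int>" by (fact ex3(1), fact ex3(2))
  show "c0 \<notin> \<int>" "c0 - 1/2 \<notin> \<int>" by (fact ex0(1), fact ex0(2))
  show "c1 \<notin> \<int>" "c1 - 1/2 \<notin> \<int>" by (fact ex1(1), fact ex1(2))
qed


lemma fm_eq: "e (of_int j / 12) = e (of_int (j mod 12) / 12)"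
proof (rule per_eq[of e, OF per])
  have "of_int j = 12 * (of_int (j div 12) :: real) + of_int (j mod 12)"
    by (metis mult_div_mod_eq of_int_add of_int_mult of_int_numeral)
  then have "(of_int j / 12 :: real) - of_int (j mod 12) / 12 = of_int (j div 12)" by (simp add: field_simps)
  then show "(of_int j / 12 :: real) - of_int (j mod 12) / 12 \<in> \<int>" by simp
qed

lemma grid:
  assumes h6: "6*c0 \<in> \<int>" and h1: "c1 - c0 - 1/2 \<in> \<int>" and h2: "4*c0 - 2*c2 \<in> \<int>"
    and h3: "c3 - c2 - 1/2 \<in> \<int>"
  shows False
proof -
  obtain N where N: "6*c0 = of_int N" using h6 by (auto elim: Ints_cases)
  obtain M where M: "4*c0 - 2*c2 = of_int M" using h2 by (auto elim: Ints_cases)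
  obtain n1 where n1: "c1 - c0 - 1/2 = of_int n1" using h1 by (auto elim: Ints_cases)
  obtain n3 where n3: "c3 - c2 - 1/2 = of_int n3" using h3 by (auto elim: Ints_cases)
  define fm where "fm \<equiv> \<lambda>j::int. e (of_int (j mod 12) / 12)"
  define r where "r = N mod 6"
  define u where "u = M mod 2"
  have c0: "c0 = of_int N / 6" using N by simp
  have c1: "c1 = of_int (2*N + 6 + 12*n1) / 12" using n1 c0 by (simp add: field_simps)
  have c2: "c2 = of_int (4*N - 6*M) / 12" using M c0 by (simp add: field_simps)
  have c3: "c3 = of_int (4*N - 6*M + 6 + 12*n3) / 12" using n3 c2 by (simp add: field_simps)
  have fe: "e (of_int j / 12) = fm j" for j unfolding fm_def by (rule fm_eq)
  have N6: "N = 6 * (N div 6) + r" unfolding r_def by simp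
  have M2: "M = 2 * (M div 2) + u" unfolding u_def by simp
  have m12: "a = b + q * 12 \<Longrightarrow> a mod 12 = b mod 12" for a b q :: int by simp
  have m6: "a = b + q * 6 \<Longrightarrow> a mod 6 = b mod 6" for a b q :: int by simp
  have R00: "fm (2*r - j) = fm j" for j
  proof -
    have "c0 - of_int j / 12 = of_int (2*N - j) / 12" using c0 by (simp add: field_simps)
    then have "e (c0 - of_int j / 12) = e (of_int (2*N - j) / 12)" by (rule arg_cong)
    then have "fm (2*N - j) = fm j" using F00[of "of_int j / 12"] fe[of j] fe[of "2*N - j"] by simp
    moreover have "(2*N - j) mod 12 = (2*r - j) mod 12" by (rule m12[of _ _ "N div 6"]) (insert N6, (simp only: ring_distribs left_diff_distrib)?; linarith?)
    ultimately show ?thesis unfolding fm_def by simp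
  qed
  have R11: "(fm (2*r + 6 - j) \<noteq> ((2*r + 6 - j) mod 6 = 3)) = (fm j \<noteq> (j mod 6 = 3))" for j
  proof -
    have "c1 - of_int j / 12 = of_int (2*N + 6 + 12*n1 - j) / 12" using c1 by (simp add: field_simps)
    then have "(fm (2*N + 6 + 12*n1 - j) \<noteq> ((2*N + 6 + 12*n1 - j) mod 6 = 3)) = (fm j \<noteq> (j mod 6 = 3))"
    proof -
      assume a: "c1 - of_int j / 12 = of_int (2*N + 6 + 12*n1 - j) / 12"
      show ?thesis using F11[of "of_int j / 12"] unfolding a fe PP_grid .
    qed
    moreover have "(2*N + 6 + 12*n1 - j) mod 12 = (2*r + 6 - j) mod 12"
      by (rule m12[of _ _ "N div 6 + n1"]) (insert N6, (simp only: ring_distribs left_diff_distrib)?; linarith?)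
    moreover have "(2*N + 6 + 12*n1 - j) mod 6 = (2*r + 6 - j) mod 6"
      by (rule m6[of _ _ "2 * (N div 6) + 2 * n1"]) (insert N6, (simp only: ring_distribs left_diff_distrib)?; linarith?)
    ultimately show ?thesis unfolding fm_def by simp
  qed
  have R10: "(fm (4*r - 6*u - j) \<noteq> ((4*r - 6*u - j) mod 12 = 3)) = (fm j \<noteq> (j mod 12 = 3))" for j
  proof -
    have "c2 - of_int j / 12 = of_int (4*N - 6*M - j) / 12" using c2 by (simp add: field_simps)
    then have "(fm (4*N - 6*M - j) \<noteq> ((4*N - 6*M - j) mod 12 = 3)) = (fm j \<noteq> (j mod 12 = 3))"
    proof -
      assume a: "c2 - of_int j / 12 = of_int (4*N - 6*M - j) / 12"
      show ?thesis using F10[of "of_int j / 12"] unfolding a fe I1_grid .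
    qed
    moreover have "(4*N - 6*M - j) mod 12 = (4*r - 6*u - j) mod 12"
      by (rule m12[of _ _ "2 * (N div 6) - M div 2"]) (insert N6 M2, (simp only: ring_distribs left_diff_distrib)?; linarith?)
    ultimately show ?thesis unfolding fm_def by simp
  qed
  have R01: "(fm (4*r - 6*u + 6 - j) \<noteq> ((4*r - 6*u + 6 - j) mod 12 = 9)) = (fm j \<noteq> (j mod 12 = 9))" for j
  proof -
    have "c3 - of_int j / 12 = of_int (4*N - 6*M + 6 + 12*n3 - j) / 12" using c3 by (simp add: field_simps)
    then have "(fm (4*N - 6*M + 6 + 12*n3 - j) \<noteq> ((4*N - 6*M + 6 + 12*n3 - j) mod 12 = 9)) = (fm j \<noteq> (j mod 12 = 9))"
    proof -
      assume a: "c3 - of_int j / 12 = of_int (4*N - 6*M + 6 + 12*n3 - j) / 12"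
      show ?thesis using F01[of "of_int j / 12"] unfolding a fe I3_grid .
    qed
    moreover have "(4*N - 6*M + 6 + 12*n3 - j) mod 12 = (4*r - 6*u + 6 - j) mod 12"
      by (rule m12[of _ _ "2 * (N div 6) - M div 2 + n3"]) (insert N6 M2, (simp only: ring_distribs left_diff_distrib)?; linarith?)
    ultimately show ?thesis unfolding fm_def by simp
  qed
  have r: "r = 1 \<or> r = 2 \<or> r = 4 \<or> r = 5"
  proof -
    have "r \<noteq> 0"
    proof
      assume "r = 0" then have "6 dvd N" using N6 by (metis add.right_neutral dvd_triv_left)
      then have "(of_int N / 6 :: real) \<in> \<int>" using Int_div6[of N] by simp
      then have "c0 \<in> \<int>" unfolding c0 .
      then show False using ex0 by simp
    qed
    moreover have "r \<noteq> 3"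
    proof
      assume "r = 3" then have "N - 3 = 6 * (N div 6)" using N6 by linarith
      then have "6 dvd (N - 3)" by (metis dvd_triv_left)
      then have "(of_int (N - 3) / 6 :: real) \<in> \<int>" using Int_div6[of "N - 3"] by simp
      moreover have "c0 - 1/2 = of_int (N - 3) / 6" using c0 by (simp add: field_simps)
      ultimately have "c0 - 1/2 \<in> \<int>" by (simp only:)
      then show False using ex0 by simp
    qed
    moreover have "0 \<le> r" "r < 6" unfolding r_def by simp_all
    ultimately show ?thesis by linarith
  qed
  have "0 \<le> u" "u < 2" unfolding u_def by simp_all
  then have u: "u = 0 \<or> u = 1" by linarith
  show False by (rule grid_final[of e r u, OF R00[unfolded fm_def] R11[unfolded fm_def]
      R10[unfolded fm_def] R01[unfolded fm_def] r u])
qed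

lemma core_half:
  assumes h: "c1 - c0 - 1/2 \<in> \<int>"
  shows False
proof -
  have A: "4*c0 - 2*c2 \<in> \<int>" and B: "4*c0 - 2*c3 \<in> \<int>" using half_step[OF h] by auto
  have "2*(c3 - c2) \<in> \<int>" by (rule Ints_comb2[OF A B]) (simp add: algebra_simps)
  then have h3: "c3 - c2 - 1/2 \<in> \<int>" using Ints_2_cases c23 by blast
  have C: "4*c2 - 2*c0 \<in> \<int>" using sys.half_step(1)[OF swap h3] .
  have "6*c0 \<in> \<int>" by (rule Ints_comb[OF Ints_2[OF A refl] C]) (simp add: algebra_simps)
  then show False using grid A h h3 by blast
qed

end


lemma sys_false:
  assumes "sys e c0 c1 c2 c3"
  shows False
proof -
  interpret sys e c0 c1 c2 c3 by (rule assms)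
  show False
  proof (cases "2*(c1 - c0) \<in> \<int>")
    case True
    then have "c1 - c0 - 1/2 \<in> \<int>" using Ints_2_cases c01 by blast
    then show False by (rule core_half)
  next
    case False
    then have "2*(c3 - c2) \<in> \<int>" using dichot by blast
    then have "c3 - c2 - 1/2 \<in> \<int>" using Ints_2_cases c23 by blast
    then show False by (rule sys.core_half[OF swap])
  qed
qed

lemma get_refl:
  assumes "has_sym E" and "\<And>b. b \<notin> \<int> \<Longrightarrow> \<forall>x. E (x + b) = E x \<Longrightarrow> False"
  shows "\<exists>c. \<forall>x. E (c - x) = E x"
  using assms unfolding has_sym_def by blast

lemma core_main:
  fixes e :: "real \<Rightarrow> bool" and \<alpha> :: real
  assumes per: "\<And>x. e (x+1) = e x"
    and nb00: "nobad \<alpha> e" and nb10: "nobad \<alpha> (\<lambda>x. e x \<noteq> I1 x)"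
    and nb01: "nobad \<alpha> (\<lambda>x. e x \<noteq> I3 x)" and nb11: "nobad \<alpha> (\<lambda>x. e x \<noteq> PP x)"
    and hs00: "has_sym e" and hs10: "has_sym (\<lambda>x. e x \<noteq> I1 x)"
    and hs01: "has_sym (\<lambda>x. e x \<noteq> I3 x)" and hs11: "has_sym (\<lambda>x. e x \<noteq> PP x)"
  shows False
proof -
  define E10 where "E10 = (\<lambda>x. e x \<noteq> I1 x)"
  define E01 where "E01 = (\<lambda>x. e x \<noteq> I3 x)"
  define E11 where "E11 = (\<lambda>x. e x \<noteq> PP x)"
  have per10: "\<And>x. E10 (x+1) = E10 x" unfolding E10_def using per I_per by simp
  have per01: "\<And>x. E01 (x+1) = E01 x" unfolding E01_def using per I_per by simp
  have per11: "\<And>x. E11 (x+1) = E11 x" unfolding E11_def using per I_per by simp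
  have w1: "2 * (1/4::real) - 1/2 \<in> \<int>" by simp
  have w3: "2 * (3/4::real) - 1/2 \<in> \<int>" by simp
  have eq10: "\<forall>x. E10 x = (e x \<noteq> (x - 1/4 \<in> \<int>))" unfolding E10_def I1_def by blast
  have eq00a: "\<forall>x. e x = (E10 x \<noteq> (x - 1/4 \<in> \<int>))" unfolding E10_def I1_def by blast
  have eq00b: "\<forall>x. e x = (E01 x \<noteq> (x - 3/4 \<in> \<int>))" unfolding E01_def I3_def by blast
  obtain c0 where r0: "\<forall>x. e (c0 - x) = e x"
  proof -
    have "\<exists>c. \<forall>x. e (c - x) = e x"
    proof (rule get_refl[OF hs00])
      fix b assume "b \<notin> \<int>" "\<forall>x. e (x + b) = e x"
      then show False
        by (rule trans_kill[OF per nb00 _ _ w1 eq10 hs10[folded E10_def]])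
    qed
    then show ?thesis using that by blast
  qed
  obtain c2 where r2: "\<forall>x. E10 (c2 - x) = E10 x"
  proof -
    have "\<exists>c. \<forall>x. E10 (c - x) = E10 x"
    proof (rule get_refl[OF hs10[folded E10_def]])
      fix b assume "b \<notin> \<int>" "\<forall>x. E10 (x + b) = E10 x"
      then show False
        by (rule trans_kill[OF per10 nb10[folded E10_def] _ _ w1 eq00a hs00])
    qed
    then show ?thesis using that by blast
  qed
  obtain c3 where r3: "\<forall>x. E01 (c3 - x) = E01 x"
  proof -
    have "\<exists>c. \<forall>x. E01 (c - x) = E01 x"
    proof (rule get_refl[OF hs01[folded E01_def]])
      fix b assume "b \<notin> \<int>" "\<forall>x. E01 (x + b) = E01 x"
      then show False
        by (rule trans_kill[OF per01 nb01[folded E01_def] _ _ w3 eq00b hs00])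
    qed
    then show ?thesis using that by blast
  qed
  obtain c1 where r1: "\<forall>x. E11 (c1 - x) = E11 x"
  proof -
    have "\<exists>c. \<forall>x. E11 (c - x) = E11 x"
    proof (rule get_refl[OF hs11[folded E11_def]])
      fix b assume b: "b \<notin> \<int>" "\<forall>x. E11 (x + b) = E11 x"
      have eq: "\<forall>x. E01 x = (E11 x \<noteq> (x - 1/4 \<in> \<int>))"
        unfolding E01_def E11_def using PP_xor(2) unfolding I1_def by blast
      show False
        by (rule trans_kill[OF per11 nb11[folded E11_def] b w1 eq hs01[folded E01_def]])
    qed
    then show ?thesis using that by blast
  qed
  have "sys e c0 c1 c2 c3"
  proof
    show "\<And>x. e (x+1) = e x" by (rule per)
    show "\<And>x. e (c0 - x) = e x" using r0 by blast
    show "\<And>x. (e (c1 - x) \<noteq> PP (c1 - x)) = (e x \<noteq> PP x)" using r1 unfolding E11_def by blast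
    show "\<And>x. (e (c2 - x) \<noteq> I1 (c2 - x)) = (e x \<noteq> I1 x)" using r2 unfolding E10_def by blast
    show "\<And>x. (e (c3 - x) \<noteq> I3 (c3 - x)) = (e x \<noteq> I3 x)" using r3 unfolding E01_def by blast
    show "c0 \<notin> \<int>" "c0 - 1/2 \<notin> \<int>" using nb_refl[OF per nb00 r0] by auto
    show "c1 \<notin> \<int>" "c1 - 1/2 \<notin> \<int>" using nb_refl[OF per11 nb11[folded E11_def] r1] by auto
    show "c2 \<notin> \<int>" "c2 - 1/2 \<notin> \<int>" using nb_refl[OF per10 nb10[folded E10_def] r2] by auto
    show "c3 \<notin> \<int>" "c3 - 1/2 \<notin> \<int>" using nb_refl[OF per01 nb01[folded E01_def] r3] by auto
  qed
  then show False by (rule sys_false)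
qed


section \<open>Circle level\<close>

lemma Ints_small: "(x::real) \<in> \<int> \<Longrightarrow> -1 < x \<Longrightarrow> x < 1 \<Longrightarrow> x = 0"
  by (auto elim!: Ints_cases)

lemma Rep_cpt: "Rep_circle (cpt x) = frac x"
  unfolding cpt_def by (rule Abs_circle_inverse) (simp add: frac_lt_1)

lemma cpt_Rep: "cpt (Rep_circle p) = p"
proof -
  have "0 \<le> Rep_circle p" "Rep_circle p < 1" using Rep_circle[of p] by auto
  then have "frac (Rep_circle p) = Rep_circle p" by (simp add: frac_eq)
  then show ?thesis unfolding cpt_def by (simp add: Rep_circle_inverse)
qed

lemma frac_eq_iff: "frac x = frac y \<longleftrightarrow> x - y \<in> \<int>"
proof
  assume "frac x = frac y"
  then have "frac (x - y) = 0" using frac_diff_eq[of x y] by simp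
  then show "x - y \<in> \<int>" by simp
next
  assume "x - y \<in> \<int>"
  then have "frac (x - y) = 0" by simp
  then show "frac x = frac y" by (rule frac_diff_zero)
qed

lemma cpt_eq: "cpt x = cpt y \<longleftrightarrow> x - y \<in> \<int>"
proof -
  have "cpt x = cpt y \<longleftrightarrow> Rep_circle (cpt x) = Rep_circle (cpt y)" by (simp add: Rep_circle_inject)
  also have "\<dots> \<longleftrightarrow> frac x = frac y" by (simp add: Rep_cpt)
  finally show ?thesis using frac_eq_iff by simp
qed

lemma frac_minus_Ints: "frac x - x \<in> \<int>"
  unfolding frac_def by simp

lemma trans_cpt: "translation b (cpt x) = cpt (x + b)"
proof -
  have "frac x + b - (x + b) \<in> \<int>" using frac_minus_Ints[of x] by simp
  then show ?thesis unfolding translation_def Rep_cpt by (simp add: cpt_eq)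
qed

lemma refl_cpt: "reflection b (cpt x) = cpt (- x + 2 * b)"
proof -
  have "- frac x + 2 * b - (- x + 2 * b) = - (frac x - x)" by simp
  moreover have "- (frac x - x) \<in> \<int>" by (rule Ints_minus[OF frac_minus_Ints])
  ultimately have "- frac x + 2 * b - (- x + 2 * b) \<in> \<int>" by (simp only:)
  then show ?thesis unfolding reflection_def Rep_cpt by (simp add: cpt_eq)
qed

lemma fun_eq_cpt: "(\<And>r. f (cpt r) = g (cpt r)) \<Longrightarrow> f = g"
  by (rule ext) (metis cpt_Rep)

lemma cpt_per: "cpt (x + 1) = cpt x" by (simp add: cpt_eq)

lemma trans_id: "b \<in> \<int> \<Longrightarrow> translation b = id"
  by (rule fun_eq_cpt) (simp add: trans_cpt cpt_eq)

lemma O2_cases: "\<gamma> \<in> O2 \<Longrightarrow> (\<And>a. \<gamma> = translation a \<Longrightarrow> thesis) \<Longrightarrow> (\<And>a. \<gamma> = reflection a \<Longrightarrow> thesis) \<Longrightarrow> thesis"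
  unfolding O2_def by blast

lemma trans_O2: "translation a \<in> O2" and refl_O2: "reflection a \<in> O2"
  unfolding O2_def by auto

lemma O2_comp: assumes "\<gamma> \<in> O2" "\<beta> \<in> O2" shows "\<gamma> \<circ> \<beta> \<in> O2"
proof -
  from assms(1) show ?thesis
  proof (rule O2_cases)
    fix a assume g: "\<gamma> = translation a"
    from assms(2) show ?thesis
    proof (rule O2_cases)
      fix b assume b: "\<beta> = translation b"
      have "\<gamma> \<circ> \<beta> = translation (a + b)" unfolding g b
        by (rule fun_eq_cpt) (simp add: trans_cpt algebra_simps)
      then show ?thesis by (simp add: trans_O2)
    next
      fix b assume b: "\<beta> = reflection b"
      have "\<gamma> \<circ> \<beta> = reflection (b + a/2)" unfolding g b
        by (rule fun_eq_cpt) (simp add: trans_cpt refl_cpt algebra_simps)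
      then show ?thesis by (simp add: refl_O2)
    qed
  next
    fix a assume g: "\<gamma> = reflection a"
    from assms(2) show ?thesis
    proof (rule O2_cases)
      fix b assume b: "\<beta> = translation b"
      have "\<gamma> \<circ> \<beta> = reflection (a - b/2)" unfolding g b
        by (rule fun_eq_cpt) (simp add: trans_cpt refl_cpt algebra_simps)
      then show ?thesis by (simp add: refl_O2)
    next
      fix b assume b: "\<beta> = reflection b"
      have "\<gamma> \<circ> \<beta> = translation (2*a - 2*b)" unfolding g b
        by (rule fun_eq_cpt) (simp add: trans_cpt refl_cpt algebra_simps)
      then show ?thesis by (simp add: trans_O2)
    qed
  qed
qed

lemma O2_inv: assumes "\<gamma> \<in> O2" obtains \<gamma>' where "\<gamma>' \<in> O2" "\<gamma>' \<circ> \<gamma> = id" "\<gamma> \<circ> \<gamma>' = id"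
proof -
  from assms show ?thesis
  proof (rule O2_cases)
    fix a assume g: "\<gamma> = translation a"
    have "translation (-a) \<circ> \<gamma> = id" "\<gamma> \<circ> translation (-a) = id" unfolding g
      by (rule fun_eq_cpt, simp add: trans_cpt)+
    then show ?thesis using that trans_O2 by blast
  next
    fix a assume g: "\<gamma> = reflection a"
    have "reflection a \<circ> \<gamma> = id" "\<gamma> \<circ> reflection a = id" unfolding g
      by (rule fun_eq_cpt, simp add: refl_cpt)+
    then show ?thesis using that refl_O2 by blast
  qed
qed

lemma P_transfer:
  assumes g: "\<gamma> \<in> O2" and P: "P (\<gamma> ` W)"
  shows "P W"
proof -
  obtain \<gamma>' where g': "\<gamma>' \<in> O2" "\<gamma>' \<circ> \<gamma> = id" "\<gamma> \<circ> \<gamma>' = id" using O2_inv[OF g] by blast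
  have inv1: "\<gamma>' (\<gamma> x) = x" for x using g'(2) by (metis comp_apply id_apply)
  have inv2: "\<gamma> (\<gamma>' x) = x" for x using g'(3) by (metis comp_apply id_apply)
  have conj: "\<gamma> \<circ> \<beta> \<circ> \<gamma>' = id \<Longrightarrow> \<beta> = id" for \<beta>
  proof -
    assume h: "\<gamma> \<circ> \<beta> \<circ> \<gamma>' = id"
    show "\<beta> = id"
    proof
      fix x
      have "\<gamma> (\<beta> (\<gamma>' (\<gamma> x))) = \<gamma> x" using h by (metis comp_apply id_apply)
      then have "\<gamma>' (\<gamma> (\<beta> x)) = \<gamma>' (\<gamma> x)" using inv1 by simp
      then show "\<beta> x = id x" using inv1 by simp
    qed
  qed
  have ts: "trivial_stabilizer W"
    unfolding trivial_stabilizer_def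
  proof (intro ballI impI)
    fix \<beta> assume b: "\<beta> \<in> O2" and fix_: "\<forall>w\<in>W. \<beta> w = w"
    have "\<gamma> \<circ> \<beta> \<circ> \<gamma>' \<in> O2" by (intro O2_comp g g' b)
    moreover have "\<forall>v\<in>\<gamma> ` W. (\<gamma> \<circ> \<beta> \<circ> \<gamma>') v = v" using fix_ inv1 by auto
    ultimately have "\<gamma> \<circ> \<beta> \<circ> \<gamma>' = id" using P unfolding P_def trivial_stabilizer_def by blast
    then show "\<beta> = id" by (rule conj)
  qed
  have ext: "\<exists>d. (\<forall>x. x \<notin> W \<longrightarrow> d x = c x) \<and> distinguishing d" for c :: "circle \<Rightarrow> color"
  proof -
    obtain d' where d': "\<forall>x. x \<notin> \<gamma> ` W \<longrightarrow> d' x = (c \<circ> \<gamma>') x" "distinguishing d'"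
      using P unfolding P_def by blast
    define d where "d = d' \<circ> \<gamma>"
    have "\<forall>x. x \<notin> W \<longrightarrow> d x = c x"
    proof (intro allI impI)
      fix x assume x: "x \<notin> W"
      have "\<gamma> x \<notin> \<gamma> ` W" using x inv1 by (metis imageE)
      then show "d x = c x" using d'(1) inv1 unfolding d_def by simp
    qed
    moreover have "distinguishing d"
      unfolding distinguishing_def
    proof (intro ballI impI)
      fix \<beta> assume b: "\<beta> \<in> O2" and eq: "d \<circ> \<beta> = d"
      have "\<gamma> \<circ> \<beta> \<circ> \<gamma>' \<in> O2" by (intro O2_comp g g' b)
      moreover have "d' \<circ> (\<gamma> \<circ> \<beta> \<circ> \<gamma>') = d'"
      proof
        fix x
        have "d' (\<gamma> (\<beta> (\<gamma>' x))) = d' (\<gamma> (\<gamma>' x))" using eq unfolding d_def by (metis comp_apply)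
        then show "(d' \<circ> (\<gamma> \<circ> \<beta> \<circ> \<gamma>')) x = d' x" using inv2 by simp
      qed
      ultimately have "\<gamma> \<circ> \<beta> \<circ> \<gamma>' = id" using d'(2) unfolding distinguishing_def by blast
      then show "\<beta> = id" by (rule conj)
    qed
    ultimately show ?thesis by blast
  qed
  show ?thesis unfolding P_def using ts ext by blast
qed

definition rf :: "(circle \<Rightarrow> color) \<Rightarrow> real \<Rightarrow> bool" where
  "rf d x \<longleftrightarrow> d (cpt x) = B"

lemma rf_per: "rf d (x + 1) = rf d x" unfolding rf_def by (simp add: cpt_per)

lemma not_dist_sym: assumes "\<not> distinguishing d" shows "has_sym (rf d)"
proof -
  obtain \<gamma> where g: "\<gamma> \<in> O2" "d \<circ> \<gamma> = d" "\<gamma> \<noteq> id" using assms unfolding distinguishing_def by blast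
  have dg: "d (\<gamma> p) = d p" for p using g(2) by (metis comp_apply)
  from g(1) show ?thesis
  proof (rule O2_cases)
    fix b assume gb: "\<gamma> = translation b"
    have "b \<notin> \<int>" using g(3) trans_id gb by blast
    moreover have "\<forall>x. rf d (x + b) = rf d x" unfolding rf_def using dg gb trans_cpt by metis
    ultimately show ?thesis unfolding has_sym_def by blast
  next
    fix b assume gb: "\<gamma> = reflection b"
    have "\<forall>x. rf d (2*b - x) = rf d x" unfolding rf_def using dg gb refl_cpt
      by (metis add.commute uminus_add_conv_diff)
    then show ?thesis unfolding has_sym_def by blast
  qed
qed

lemma notI_small:
  "\<not> I1 0" "\<not> I3 0" "\<not> I1 (1/2)" "\<not> I3 (1/2)" "(1/2::real) \<notin> \<int>"
proof -
  have a: "(x::real) \<notin> \<int>" if "-1 < x" "x < 1" "x \<noteq> 0" for x using Ints_small that by blast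
  show "\<not> I1 0" "\<not> I3 0" "\<not> I1 (1/2)" "\<not> I3 (1/2)" "(1/2::real) \<notin> \<int>"
    unfolding I1_def I3_def by (auto intro!: a)
qed

lemma PW0:
  fixes a :: circle
  assumes ha: "a \<notin> {cpt 0, cpt (1/4), cpt (1/2), cpt (3/4)}"
  shows "P {cpt 0, cpt (1/4), cpt (3/4), a}"
proof -
  define \<alpha> where "\<alpha> = Rep_circle a"
  have aa: "a = cpt \<alpha>" unfolding \<alpha>_def by (simp add: cpt_Rep)
  have ha0: "\<alpha> \<notin> \<int>" using ha unfolding aa by (auto simp: cpt_eq)
  have ha1: "\<alpha> - 1/4 \<notin> \<int>" using ha unfolding aa by (auto simp: cpt_eq)
  have ha2: "\<alpha> - 1/2 \<notin> \<int>" using ha unfolding aa by (auto simp: cpt_eq)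
  have ha3: "\<alpha> - 3/4 \<notin> \<int>" using ha unfolding aa by (auto simp: cpt_eq)
  define W0 where "W0 = {cpt 0, cpt (1/4), cpt (3/4), a}"
  have ts: "trivial_stabilizer W0"
    unfolding trivial_stabilizer_def
  proof (intro ballI impI)
    fix \<beta> assume b: "\<beta> \<in> O2" and fx: "\<forall>w\<in>W0. \<beta> w = w"
    have f0: "\<beta> (cpt 0) = cpt 0" and f1: "\<beta> (cpt (1/4)) = cpt (1/4)" using fx unfolding W0_def by auto
    from b show "\<beta> = id"
    proof (rule O2_cases)
      fix t assume bt: "\<beta> = translation t"
      have "t \<in> \<int>" using f0 unfolding bt trans_cpt by (simp add: cpt_eq)
      then show ?thesis using bt trans_id by simp
    next
      fix t assume bt: "\<beta> = reflection t"
      have h1: "2 * t \<in> \<int>" using f0 unfolding bt refl_cpt by (simp add: cpt_eq)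
      have h2: "- (1/4) + 2 * t - 1/4 \<in> \<int>" using f1 unfolding bt refl_cpt by (simp only: cpt_eq)
      have "1/2 \<in> (\<int>::real set)" by (rule Ints_comb2[OF h1 h2]) simp
      then show ?thesis using notI_small(5) by simp
    qed
  qed
  have ext: "\<exists>d. (\<forall>x. x \<notin> W0 \<longrightarrow> d x = c x) \<and> distinguishing d" for c :: "circle \<Rightarrow> color"
  proof (rule ccontr)
    assume nd: "\<not> (\<exists>d. (\<forall>x. x \<notin> W0 \<longrightarrow> d x = c x) \<and> distinguishing d)"
    define col0 where "col0 = (if c (cpt (1/2)) = B then R else B)"
    define cola where "cola = (if c (cpt (-\<alpha>)) = B then R else B)"
    define base where "base p = (if p = cpt 0 then col0 else if p = a then cola else c p)" for p
    define dd where "dd i j p = (if p = cpt (1/4) then i else if p = cpt (3/4) then j else base p)" for i j p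
    have agree: "\<forall>x. x \<notin> W0 \<longrightarrow> dd i j x = c x" for i j unfolding dd_def base_def W0_def by auto
    have ndist: "\<not> distinguishing (dd i j)" for i j using nd agree by blast
    define rfb where "rfb x = (base (cpt x) = B)" for x
    have c14: "(cpt x = cpt (1/4)) = I1 x" for x unfolding I1_def by (simp add: cpt_eq)
    have c34: "(cpt x = cpt (3/4)) = I3 x" for x unfolding I3_def by (simp add: cpt_eq)
    have rfdd: "rf (dd i j) x = (if I1 x then i = B else if I3 x then j = B else rfb x)" for i j x
      unfolding rf_def dd_def rfb_def c14 c34 by simp
    define e where "e = rf (dd R R)"
    have eB: "e x = (if I1 x then False else if I3 x then False else rfb x)" for x
      unfolding e_def rfdd by simp
    have e10: "rf (dd B R) = (\<lambda>x. e x \<noteq> I1 x)"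
      by (rule ext) (use I13_excl in \<open>auto simp: rfdd eB\<close>)
    have e01: "rf (dd R B) = (\<lambda>x. e x \<noteq> I3 x)"
      by (rule ext) (use I13_excl in \<open>auto simp: rfdd eB\<close>)
    have e11: "rf (dd B B) = (\<lambda>x. e x \<noteq> PP x)"
      by (rule ext) (use I13_excl in \<open>auto simp: rfdd eB PP_iff\<close>)
    have per: "\<And>x. e (x + 1) = e x" unfolding e_def by (rule rf_per)
    have nI: "\<not> I1 0" "\<not> I3 0" "\<not> I1 (1/2)" "\<not> I3 (1/2)" "\<not> I1 \<alpha>" "\<not> I3 \<alpha>" "\<not> I1 (-\<alpha>)" "\<not> I3 (-\<alpha>)"
    proof -
      show "\<not> I1 0" "\<not> I3 0" "\<not> I1 (1/2)" "\<not> I3 (1/2)" using notI_small by auto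
      show "\<not> I1 \<alpha>" "\<not> I3 \<alpha>" unfolding I1_def I3_def using ha1 ha3 by auto
      show "\<not> I1 (-\<alpha>)"
      proof
        assume "I1 (-\<alpha>)" then have "- \<alpha> - 1/4 \<in> \<int>" unfolding I1_def .
        then have "\<alpha> - 3/4 \<in> \<int>" by (rule Ints_comb2[OF Ints_minus[OF Ints_1]]) simp
        then show False using ha3 by simp
      qed
      show "\<not> I3 (-\<alpha>)"
      proof
        assume "I3 (-\<alpha>)" then have "- \<alpha> - 3/4 \<in> \<int>" unfolding I3_def .
        then have "\<alpha> - 1/4 \<in> \<int>" by (rule Ints_comb2[OF Ints_minus[OF Ints_1]]) simp
        then show False using ha1 by simp
      qed
    qed
    have b0: "rfb 0 = (col0 = B)" unfolding rfb_def base_def by simp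
    have bh: "rfb (1/2) = (c (cpt (1/2)) = B)"
    proof -
      have "cpt (1/2) \<noteq> cpt 0" using notI_small(5) by (simp add: cpt_eq)
      moreover have "cpt (1/2) \<noteq> a" using ha by auto
      ultimately show ?thesis unfolding rfb_def base_def by simp
    qed
    have ba: "rfb \<alpha> = (cola = B)"
    proof -
      have "a \<noteq> cpt 0" using ha by auto
      then show ?thesis unfolding rfb_def base_def aa by simp
    qed
    have bma: "rfb (-\<alpha>) = (c (cpt (-\<alpha>)) = B)"
    proof -
      have "cpt (-\<alpha>) \<noteq> cpt 0"
      proof
        assume "cpt (-\<alpha>) = cpt 0" then have "-\<alpha> \<in> \<int>" by (simp add: cpt_eq)
        then have "\<alpha> \<in> \<int>" using Ints_minus by force
        then show False using ha0 by simp
      qed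
      moreover have "cpt (-\<alpha>) \<noteq> a"
      proof
        assume "cpt (-\<alpha>) = a" then have "-\<alpha> - \<alpha> \<in> \<int>" unfolding aa by (simp only: cpt_eq)
        then have "2 * \<alpha> \<in> \<int>" by (rule Ints_neg') simp
        then show False using Ints_2_cases ha0 ha2 by blast
      qed
      ultimately show ?thesis unfolding rfb_def base_def by simp
    qed
    have nbbase: "rfb (1/2) \<noteq> rfb 0" "rfb (-\<alpha>) \<noteq> rfb \<alpha>"
      using b0 bh ba bma unfolding col0_def cola_def by (auto split: if_splits)
    have nb00: "nobad \<alpha> e" unfolding nobad_def using nbbase nI by (simp add: eB)
    have nb10: "nobad \<alpha> (\<lambda>x. e x \<noteq> I1 x)" unfolding nobad_def using nbbase nI by (simp add: eB)
    have nb01: "nobad \<alpha> (\<lambda>x. e x \<noteq> I3 x)" unfolding nobad_def using nbbase nI by (simp add: eB)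
    have nb11: "nobad \<alpha> (\<lambda>x. e x \<noteq> PP x)" unfolding nobad_def PP_iff using nbbase nI by (simp add: eB)
    have hs00: "has_sym e" unfolding e_def by (rule not_dist_sym[OF ndist])
    have hs10: "has_sym (\<lambda>x. e x \<noteq> I1 x)" unfolding e10[symmetric] by (rule not_dist_sym[OF ndist])
    have hs01: "has_sym (\<lambda>x. e x \<noteq> I3 x)" unfolding e01[symmetric] by (rule not_dist_sym[OF ndist])
    have hs11: "has_sym (\<lambda>x. e x \<noteq> PP x)" unfolding e11[symmetric] by (rule not_dist_sym[OF ndist])
    show False by (rule core_main[OF per nb00 nb10 nb01 nb11 hs00 hs10 hs01 hs11])
  qed
  show ?thesis unfolding P_def W0_def[symmetric] using ts ext by blast
qed

theorem lemma2p4p2: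
  fixes W :: "circle set" and a :: circle
  assumes "a \<notin> {cpt 0, cpt (1/4), cpt (1/2), cpt (3/4)}"
    and "congruent_sets W {cpt 0, cpt (1/4), cpt (3/4), a}"
  shows "P W"
proof -
  obtain \<gamma> where g: "\<gamma> \<in> O2" "{cpt 0, cpt (1/4), cpt (3/4), a} = \<gamma> ` W"
    using assms(2) unfolding congruent_sets_def by blast
  have "P (\<gamma> ` W)" using PW0[OF assms(1)] g(2) by simp
  then show ?thesis by (rule P_transfer[OF g(1)])
qed

end
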